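(* Let $H$ be a binary tree based graph and let $S$ be a guarded set of literals over variables of $\phi_H$. Then $\Pr({\bf EC}(S))=2^{-|S\setminus Fix(S)|}$.
   Context: Sets of literals never contain a variable together with its negation. A rooted tree is extended if none of its leaves has a sibling. A graph $H$ is a binary tree based graph if it is the edge-disjoint union of extended rooted trees $T_1,\dots,T_m$ with roots $t_1,\dots,t_m$ such that every leaf of some $T_i$ is a leaf of exactly two of the trees, and any two trees have at most one common vertex, which is a leaf of both. $T_i,T_j$ are adjacent if they share a leaf $\ell_{i,j}$; $P_{i,j}$ is the path between $t_i$ and $t_j$ in $T_i\cup T_j$. A pseudoedge is a pair $\{t_i,t_j\}$ with $T_i,T_j$ adjacent. $\phi_H$ is the CNF on variables $V(H)$ with a clause $C_{i,j}$ (positive literals of $V(P_{i,j})$) for each pseudoedge; the non-leaf variables of $C_{i,j}$ are its variables other than $\ell_{i,j}$. A set $S$ of literals is guarded from $C_{i,j}$ if (1) $\ell_{i,j}$ does not occur in $S$, or (2) some non-leaf variable of $C_{i,j}$ occurs positively in $S$, or (3) $\ell_{i,j}$ occurs positively in $S$ and all other variables of $C_{i,j}$ occur negatively in $S$; $S$ is guarded if it is guarded from every clause of $\phi_H$. The positive literal $\ell_{i,j}$ is fixed w.r.t. $S$ if $\ell_{i,j}\in S$ and all other variables of $C_{i,j}$ occur negatively in $S$; $Fix(S)$ is the set of fixed literals. ${\bf SAT}(H)$ is the set of satisfying assignments of $\phi_H$; each $S'\in{\bf SAT}(H)$ has probability $(1/2)^{|V(H)\setminus Fix(S')|}$. ${\bf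 EC}(S)=\{S'\in{\bf SAT}(H):S\subseteq S'\}$. *)

theory Defs
  imports Complex_Main
begin

text \<open>A rooted tree on a finite vertex set V with root r is represented by a parent
  function p: every vertex x of V other than r has parent p x in V, p r = r (convention),
  and iterating p from any vertex reaches r (so there are no cycles).\<close>

definition rooted_tree :: "'v set \<Rightarrow> 'v \<Rightarrow> ('v \<Rightarrow> 'v) \<Rightarrow> bool" where
  "rooted_tree V r p \<longleftrightarrow> finite V \<and> r \<in> V \<and> p r = r \<and> (\<forall>x\<in>V. p x \<in> V)
     \<and> (\<forall>x\<in>V. \<exists>k. (p ^^ k) x = r)"

definition tree_edges :: "'v set \<Rightarrow> 'v \<Rightarrow> ('v \<Rightarrow> 'v) \<Rightarrow> 'v set set" where
  "tree_edges V r p = {{x, p x} | x. x \<in> V \<and> x \<noteq> r}"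

definition children :: "'v set \<Rightarrow> 'v \<Rightarrow> ('v \<Rightarrow> 'v) \<Rightarrow> 'v \<Rightarrow> 'v set" where
  "children V r p v = {y \<in> V. y \<noteq> r \<and> p y = v}"

definition tree_leaves :: "'v set \<Rightarrow> 'v \<Rightarrow> ('v \<Rightarrow> 'v) \<Rightarrow> 'v set" where
  "tree_leaves V r p = {x \<in> V. x \<noteq> r \<and> children V r p x = {}}"

definition extended :: "'v set \<Rightarrow> 'v \<Rightarrow> ('v \<Rightarrow> 'v) \<Rightarrow> bool" where
  "extended V r p \<longleftrightarrow> (\<forall>x \<in> tree_leaves V r p. \<forall>y\<in>V. y \<noteq> r \<and> y \<noteq> x \<longrightarrow> p y \<noteq> p x)"

text \<open>Binary tree based graph given by its decomposition into trees T_i (i < m),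
  T_i having vertex set V i, root r i, parent function p i.\<close>
definition btbg :: "nat \<Rightarrow> (nat \<Rightarrow> 'v set) \<Rightarrow> (nat \<Rightarrow> 'v) \<Rightarrow> (nat \<Rightarrow> 'v \<Rightarrow> 'v) \<Rightarrow> bool" where
  "btbg m V r p \<longleftrightarrow>
     (\<forall>i<m. rooted_tree (V i) (r i) (p i) \<and> extended (V i) (r i) (p i))
   \<and> (\<forall>i<m. \<forall>j<m. i \<noteq> j \<longrightarrow> tree_edges (V i) (r i) (p i) \<inter> tree_edges (V j) (r j) (p j) = {})
   \<and> (\<forall>i<m. \<forall>x \<in> tree_leaves (V i) (r i) (p i).
          card {j. j < m \<and> x \<in> tree_leaves (V j) (r j) (p j)} = 2)
   \<and> (\<forall>i<m. \<forall>j<m. i \<noteq> j \<longrightarrow> card (V i \<inter> V j) \<le> 1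
          \<and> V i \<inter> V j \<subseteq> tree_leaves (V i) (r i) (p i) \<inter> tree_leaves (V j) (r j) (p j))"

definition VH :: "nat \<Rightarrow> (nat \<Rightarrow> 'v set) \<Rightarrow> 'v set" where
  "VH m V = (\<Union>i<m. V i)"

definition adjacent :: "nat \<Rightarrow> (nat \<Rightarrow> 'v set) \<Rightarrow> (nat \<Rightarrow> 'v) \<Rightarrow> (nat \<Rightarrow> 'v \<Rightarrow> 'v) \<Rightarrow> nat \<Rightarrow> nat \<Rightarrow> bool" where
  "adjacent m V r p i j \<longleftrightarrow> i < m \<and> j < m \<and> i \<noteq> j \<and>
     tree_leaves (V i) (r i) (p i) \<inter> tree_leaves (V j) (r j) (p j) \<noteq> {}"

definition common_leaf :: "(nat \<Rightarrow> 'v set) \<Rightarrow> nat \<Rightarrow> nat \<Rightarrow> 'v" where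
  "common_leaf V i j = (THE l. l \<in> V i \<inter> V j)"

definition to_root :: "('v \<Rightarrow> 'v) \<Rightarrow> 'v \<Rightarrow> 'v set" where
  "to_root q v = range (\<lambda>k. (q ^^ k) v)"

text \<open>V(P_{i,j}): vertices of the path between t_i and t_j in T_i \<union> T_j; these are the
  variables of clause C_{i,j} (all occurring positively).\<close>
definition clause_vars :: "(nat \<Rightarrow> 'v set) \<Rightarrow> (nat \<Rightarrow> 'v \<Rightarrow> 'v) \<Rightarrow> nat \<Rightarrow> nat \<Rightarrow> 'v set" where
  "clause_vars V p i j = to_root (p i) (common_leaf V i j) \<union> to_root (p j) (common_leaf V i j)"

text \<open>Literals: (x, True) is the positive literal x, (x, False) its negation.\<close>
type_synonym 'v lit = "'v \<times> bool"

definition consistent :: "'v lit set \<Rightarrow> bool" where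
  "consistent S \<longleftrightarrow> (\<forall>x. \<not> ((x, True) \<in> S \<and> (x, False) \<in> S))"

definition occurs :: "'v \<Rightarrow> 'v lit set \<Rightarrow> bool" where
  "occurs x S \<longleftrightarrow> (x, True) \<in> S \<or> (x, False) \<in> S"

definition guarded :: "nat \<Rightarrow> (nat \<Rightarrow> 'v set) \<Rightarrow> (nat \<Rightarrow> 'v) \<Rightarrow> (nat \<Rightarrow> 'v \<Rightarrow> 'v) \<Rightarrow> 'v lit set \<Rightarrow> bool" where
  "guarded m V r p S \<longleftrightarrow> (\<forall>i j. adjacent m V r p i j \<longrightarrow>
     (let l = common_leaf V i j; C = clause_vars V p i j in
        \<not> occurs l S
      \<or> (\<exists>v \<in> C - {l}. (v, True) \<in> S)
      \<or> ((l, True) \<in> S \<and> (\<forall>v \<in> C - {l}. (v, False) \<in> S))))"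

definition Fix :: "nat \<Rightarrow> (nat \<Rightarrow> 'v set) \<Rightarrow> (nat \<Rightarrow> 'v) \<Rightarrow> (nat \<Rightarrow> 'v \<Rightarrow> 'v) \<Rightarrow> 'v lit set \<Rightarrow> 'v lit set" where
  "Fix m V r p S = {(common_leaf V i j, True) | i j. adjacent m V r p i j
      \<and> (common_leaf V i j, True) \<in> S
      \<and> (\<forall>v \<in> clause_vars V p i j - {common_leaf V i j}. (v, False) \<in> S)}"

text \<open>Satisfying assignments of phi_H, as complete consistent sets of literals over V(H).\<close>
definition SAT :: "nat \<Rightarrow> (nat \<Rightarrow> 'v set) \<Rightarrow> (nat \<Rightarrow> 'v) \<Rightarrow> (nat \<Rightarrow> 'v \<Rightarrow> 'v) \<Rightarrow> 'v lit set set" where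
  "SAT m V r p = {S'. consistent S' \<and> fst ` S' = VH m V
      \<and> (\<forall>i j. adjacent m V r p i j \<longrightarrow> (\<exists>v \<in> clause_vars V p i j. (v, True) \<in> S'))}"

definition prob :: "nat \<Rightarrow> (nat \<Rightarrow> 'v set) \<Rightarrow> (nat \<Rightarrow> 'v) \<Rightarrow> (nat \<Rightarrow> 'v \<Rightarrow> 'v) \<Rightarrow> 'v lit set \<Rightarrow> real" where
  "prob m V r p S' = (1/2) ^ card (VH m V - {x. (x, True) \<in> Fix m V r p S'})"

definition EC :: "nat \<Rightarrow> (nat \<Rightarrow> 'v set) \<Rightarrow> (nat \<Rightarrow> 'v) \<Rightarrow> (nat \<Rightarrow> 'v \<Rightarrow> 'v) \<Rightarrow> 'v lit set \<Rightarrow> 'v lit set set" where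
  "EC m V r p S = {S' \<in> SAT m V r p. S \<subseteq> S'}"

definition Pr :: "nat \<Rightarrow> (nat \<Rightarrow> 'v set) \<Rightarrow> (nat \<Rightarrow> 'v) \<Rightarrow> (nat \<Rightarrow> 'v \<Rightarrow> 'v) \<Rightarrow> 'v lit set set \<Rightarrow> real" where
  "Pr m V r p A = (\<Sum>S'\<in>A. prob m V r p S')"

end

theory Submission
  imports Defs
begin

lemma funpow_in: "\<forall>x\<in>W. q x \<in> W \<Longrightarrow> x \<in> W \<Longrightarrow> (q ^^ k) x \<in> W"
  by (induction k) auto

lemma leaves_sub: "tree_leaves W t q \<subseteq> W"
  unfolding tree_leaves_def by auto

lemma to_root_nonleaf:
  assumes "rooted_tree W t q" "x \<in> W" "v \<in> to_root q x" "v \<noteq> x"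
  shows "v \<in> W \<and> v \<notin> tree_leaves W t q"
proof -
  obtain k where v: "v = (q ^^ k) x" using assms(3) unfolding to_root_def by auto
  have cl: "\<forall>y\<in>W. q y \<in> W" "t \<in> W" "q t = t" using assms(1) unfolding rooted_tree_def by auto
  have "k \<noteq> 0" using v assms(4) by (cases k) auto
  then obtain k' where k: "k = Suc k'" by (cases k) auto
  define w where "w = (q ^^ k') x"
  have w: "w \<in> W" unfolding w_def using funpow_in[OF cl(1) assms(2)] .
  have vw: "v = q w" using v k unfolding w_def by simp
  show ?thesis
  proof (cases "w = t")
    case True
    then show ?thesis using vw cl unfolding tree_leaves_def by auto
  next
    case False
    then have "w \<in> children W t q v" using w vw unfolding children_def by auto
    then show ?thesis using vw w cl(1) unfolding tree_leaves_def by auto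
  qed
qed

lemma to_root_self: "x \<in> to_root q x"
  unfolding to_root_def by (auto intro: range_eqI[where x=0])

lemma btbg_parts:
  assumes "btbg m V r p"
  shows "\<forall>i<m. rooted_tree (V i) (r i) (p i) \<and> extended (V i) (r i) (p i)"
    and "\<forall>i<m. \<forall>x \<in> tree_leaves (V i) (r i) (p i).
          card {j. j < m \<and> x \<in> tree_leaves (V j) (r j) (p j)} = 2"
    and "\<forall>i<m. \<forall>j<m. i \<noteq> j \<longrightarrow> card (V i \<inter> V j) \<le> 1
          \<and> V i \<inter> V j \<subseteq> tree_leaves (V i) (r i) (p i) \<inter> tree_leaves (V j) (r j) (p j)"
  using assms unfolding btbg_def apply -
  apply (elim conjE, assumption)+
  done

lemma btbg_tree: "btbg m V r p \<Longrightarrow> i < m \<Longrightarrow> rooted_tree (V i) (r i) (p i)"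
  using btbg_parts(1) by blast

lemma btbg_leafcard: "btbg m V r p \<Longrightarrow> i < m \<Longrightarrow> x \<in> tree_leaves (V i) (r i) (p i) \<Longrightarrow>
   card {j. j < m \<and> x \<in> tree_leaves (V j) (r j) (p j)} = 2"
  using btbg_parts(2) by blast

lemma btbg_inter: "btbg m V r p \<Longrightarrow> i < m \<Longrightarrow> j < m \<Longrightarrow> i \<noteq> j \<Longrightarrow> card (V i \<inter> V j) \<le> 1"
  using btbg_parts(3) by blast

lemma btbg_inter_sub: "btbg m V r p \<Longrightarrow> i < m \<Longrightarrow> j < m \<Longrightarrow> i \<noteq> j \<Longrightarrow>
   V i \<inter> V j \<subseteq> tree_leaves (V i) (r i) (p i) \<inter> tree_leaves (V j) (r j) (p j)"
  using btbg_parts(3) by blast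

lemma common_leaf_prop:
  assumes "btbg m V r p" "adjacent m V r p i j"
  shows "common_leaf V i j \<in> tree_leaves (V i) (r i) (p i) \<inter> tree_leaves (V j) (r j) (p j)"
    "\<forall>y \<in> V i \<inter> V j. y = common_leaf V i j"
proof -
  have ij: "i < m" "j < m" "i \<noteq> j" using assms(2) unfolding adjacent_def by auto
  obtain l where l: "l \<in> tree_leaves (V i) (r i) (p i) \<inter> tree_leaves (V j) (r j) (p j)"
    using assms(2) unfolding adjacent_def by auto
  have lV: "l \<in> V i \<inter> V j" using l leaves_sub by fast
  have fin: "finite (V i \<inter> V j)" using btbg_tree[OF assms(1) ij(1)] unfolding rooted_tree_def by auto
  have card: "card (V i \<inter> V j) \<le> 1" and sub: "V i \<inter> V j \<subseteq> tree_leaves (V i) (r i) (p i) \<inter> tree_leaves (V j) (r j) (p j)"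
    using btbg_inter[OF assms(1) ij] btbg_inter_sub[OF assms(1) ij] by auto
  have "\<forall>a1\<in>V i \<inter> V j. \<forall>a2\<in>V i \<inter> V j. a1 = a2" using card_le_Suc0_iff_eq[OF fin] card by simp
  then have all: "\<forall>y \<in> V i \<inter> V j. y = l" using lV by blast
  have "common_leaf V i j = l" unfolding common_leaf_def
  proof (rule the_equality)
    show "l \<in> V i \<inter> V j" using lV .
    show "\<And>y. y \<in> V i \<inter> V j \<Longrightarrow> y = l" using all by blast
  qed
  then show "common_leaf V i j \<in> tree_leaves (V i) (r i) (p i) \<inter> tree_leaves (V j) (r j) (p j)"
    "\<forall>y \<in> V i \<inter> V j. y = common_leaf V i j" using l all by simp_all
qed

lemma common_leaf_sym: "common_leaf V i j = common_leaf V j i"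
  unfolding common_leaf_def by (simp add: Int_commute)

lemma clause_sym: "clause_vars V p i j = clause_vars V p j i"
  unfolding clause_vars_def by (auto simp: common_leaf_sym)

lemma clause_unique:
  assumes B: "btbg m V r p" and a1: "adjacent m V r p i j" and a2: "adjacent m V r p i' j'"
    and e: "common_leaf V i j = common_leaf V i' j'"
  shows "clause_vars V p i j = clause_vars V p i' j'"
proof -
  define l where "l = common_leaf V i j"
  define J where "J = {k. k < m \<and> l \<in> tree_leaves (V k) (r k) (p k)}"
  have ij: "i < m" "j < m" "i \<noteq> j" using a1 unfolding adjacent_def by auto
  have ij': "i' < m" "j' < m" "i' \<noteq> j'" using a2 unfolding adjacent_def by auto
  have l1: "l \<in> tree_leaves (V i) (r i) (p i) \<inter> tree_leaves (V j) (r j) (p j)"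
    using common_leaf_prop(1)[OF B a1] unfolding l_def .
  have l2: "l \<in> tree_leaves (V i') (r i') (p i') \<inter> tree_leaves (V j') (r j') (p j')"
    using common_leaf_prop(1)[OF B a2] unfolding l_def e .
  have cJ: "card J = 2" using btbg_leafcard[OF B ij(1)] l1 unfolding J_def by blast
  have fJ: "finite J" unfolding J_def by auto
  have s1: "{i, j} \<subseteq> J" and s2: "{i', j'} \<subseteq> J" using l1 l2 ij ij' unfolding J_def by auto
  have "{i, j} = J" using s1 cJ fJ ij(3) by (intro card_subset_eq) auto
  moreover have "{i', j'} = J" using s2 cJ fJ ij'(3) by (intro card_subset_eq) auto
  ultimately have "{i, j} = {i', j'}" by simp
  then have "(i = i' \<and> j = j') \<or> (i = j' \<and> j = i')" by (auto simp: doubleton_eq_iff)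
  then show ?thesis
  proof
    assume "i = i' \<and> j = j'" then show ?thesis by simp
  next
    assume "i = j' \<and> j = i'" then show ?thesis using clause_sym[of V p i j] by simp
  qed
qed

lemma clause_nonleaf:
  assumes B: "btbg m V r p" and a: "adjacent m V r p i j"
    and v: "v \<in> clause_vars V p i j" "v \<noteq> common_leaf V i j"
  shows "v \<in> VH m V \<and> v \<notin> (\<Union>k<m. tree_leaves (V k) (r k) (p k))"
proof -
  have ij: "i < m" "j < m" "i \<noteq> j" using a unfolding adjacent_def by auto
  define l where "l = common_leaf V i j"
  have l: "l \<in> tree_leaves (V i) (r i) (p i) \<inter> tree_leaves (V j) (r j) (p j)"
    using common_leaf_prop(1)[OF B a] unfolding l_def .
  have gen: "v \<in> VH m V \<and> v \<notin> (\<Union>k<m. tree_leaves (V k) (r k) (p k))"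
    if i: "i < m" and li: "l \<in> V i" and vi: "v \<in> to_root (p i) l" and vl: "v \<noteq> l" for i
  proof -
    have vi2: "v \<in> V i \<and> v \<notin> tree_leaves (V i) (r i) (p i)"
      using to_root_nonleaf[OF btbg_tree[OF B i] li vi vl] .
    have no: False if k: "k < m" "v \<in> tree_leaves (V k) (r k) (p k)" for k
    proof -
      have "k \<noteq> i" using k vi2 by auto
      then have "V i \<inter> V k \<subseteq> tree_leaves (V i) (r i) (p i) \<inter> tree_leaves (V k) (r k) (p k)"
        using btbg_inter_sub[OF B i k(1)] by blast
      moreover have "v \<in> V k" using k(2) leaves_sub by fast
      ultimately show False using vi2 by blast
    qed
    have "v \<in> VH m V" using i vi2 unfolding VH_def by blast
    moreover have "v \<notin> (\<Union>k<m. tree_leaves (V k) (r k) (p k))"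
    proof
      assume "v \<in> (\<Union>k<m. tree_leaves (V k) (r k) (p k))"
      then obtain k where "k < m" "v \<in> tree_leaves (V k) (r k) (p k)" by blast
      then show False by (rule no)
    qed
    ultimately show ?thesis by blast
  qed
  have vl: "v \<noteq> l" using v(2) unfolding l_def .
  have li: "l \<in> V i" "l \<in> V j" using l leaves_sub[of "V i" "r i" "p i"] leaves_sub[of "V j" "r j" "p j"] by blast+
  have disj: "v \<in> to_root (p i) l \<or> v \<in> to_root (p j) l" using v(1) unfolding clause_vars_def l_def by simp
  then show ?thesis
  proof
    assume "v \<in> to_root (p i) l" then show ?thesis using gen[OF ij(1) li(1) _ vl] by blast
  next
    assume "v \<in> to_root (p j) l" then show ?thesis using gen[OF ij(2) li(2) _ vl] by blast
  qed
qed

lemma leaf_adj: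
  assumes B: "btbg m V r p" and k: "k < m" and l: "l \<in> tree_leaves (V k) (r k) (p k)"
  shows "\<exists>i j. adjacent m V r p i j \<and> common_leaf V i j = l"
proof -
  define J where "J = {k. k < m \<and> l \<in> tree_leaves (V k) (r k) (p k)}"
  have cJ: "card J = 2" using btbg_leafcard[OF B k l] unfolding J_def by blast
  have kJ: "k \<in> J" using k l unfolding J_def by auto
  have "card (J - {k}) = 1" using cJ kJ by simp
  then obtain j where "J - {k} = {j}" by (auto simp: card_1_singleton_iff)
  then have j: "j \<in> J" "j \<noteq> k" by auto
  have adj: "adjacent m V r p k j" using j k l unfolding J_def adjacent_def by auto
  have "l \<in> V k \<inter> V j" using l j leaves_sub[of "V k" "r k" "p k"] leaves_sub[of "V j" "r j" "p j"] unfolding J_def by blast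
  then have "l = common_leaf V k j" using common_leaf_prop(2)[OF B adj] by blast
  then show ?thesis using adj by (intro exI[of _ k] exI[of _ j]) simp
qed

lemma sum_Pow_prod:
  fixes g :: "'a \<Rightarrow> bool \<Rightarrow> real"
  assumes "finite A"
  shows "(\<Sum>T\<in>Pow A. \<Prod>x\<in>A. g x (x\<in>T)) = (\<Prod>x\<in>A. g x True + g x False)"
  using assms
proof (induction A rule: finite_induct)
  case empty show ?case by simp
next
  case (insert a A)
  have disj: "Pow A \<inter> insert a ` Pow A = {}" using insert.hyps(2) by auto
  have inj: "inj_on (insert a) (Pow A)" using insert.hyps(2) unfolding inj_on_def by (metis PowD insert_ident subsetD)
  have fin: "finite (Pow A)" using insert.hyps(1) by simp
  have "(\<Sum>T\<in>Pow (insert a A). \<Prod>x\<in>insert a A. g x (x\<in>T))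
      = (\<Sum>T\<in>Pow A. \<Prod>x\<in>insert a A. g x (x\<in>T)) + (\<Sum>T\<in>insert a ` Pow A. \<Prod>x\<in>insert a A. g x (x\<in>T))"
    unfolding Pow_insert by (rule sum.union_disjoint) (use fin disj in auto)
  also have "(\<Sum>T\<in>Pow A. \<Prod>x\<in>insert a A. g x (x\<in>T)) = (\<Sum>T\<in>Pow A. g a False * (\<Prod>x\<in>A. g x (x\<in>T)))"
  proof (rule sum.cong)
    fix T assume "T \<in> Pow A"
    then have "a \<notin> T" using insert.hyps(2) by auto
    then show "(\<Prod>x\<in>insert a A. g x (x\<in>T)) = g a False * (\<Prod>x\<in>A. g x (x\<in>T))"
      using insert.hyps by (simp add: prod.insert)
  qed simp
  also have "(\<Sum>T\<in>insert a ` Pow A. \<Prod>x\<in>insert a A. g x (x\<in>T)) = (\<Sum>T\<in>Pow A. \<Prod>x\<in>insert a A. g x (x\<in>insert a T))"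
    by (simp add: sum.reindex inj)
  also have "\<dots> = (\<Sum>T\<in>Pow A. g a True * (\<Prod>x\<in>A. g x (x\<in>T)))"
  proof (rule sum.cong)
    fix T assume "T \<in> Pow A"
    have "(\<Prod>x\<in>A. g x (x\<in>insert a T)) = (\<Prod>x\<in>A. g x (x\<in>T))"
      using insert.hyps(2) by (intro prod.cong) (auto intro!: arg_cong[where f="g _"])
    then show "(\<Prod>x\<in>insert a A. g x (x\<in>insert a T)) = g a True * (\<Prod>x\<in>A. g x (x\<in>T))"
      using insert.hyps by (simp add: prod.insert)
  qed simp
  finally show ?case using insert by (simp add: sum_distrib_left[symmetric] algebra_simps)
qed

lemma prod_if_half:
  fixes c :: real
  assumes "finite X"
  shows "(\<Prod>x\<in>X. if x\<in>Y then c else 1) = c ^ card (X \<inter> Y)"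
  using assms by (simp add: prod.If_cases Int_def)

lemma abstract_count:
  fixes N L P Q :: "'a set" and K :: "'a \<Rightarrow> 'a set"
  assumes fN: "finite N" and fL: "finite L" and NL: "N \<inter> L = {}"
    and KN: "\<And>l. l \<in> L \<Longrightarrow> K l \<subseteq> N" and PQ: "P \<inter> Q = {}" and PQs: "P \<union> Q \<subseteq> N \<union> L"
    and G: "\<And>l. l \<in> L \<Longrightarrow> (l \<notin> P \<and> l \<notin> Q) \<or> K l \<inter> P \<noteq> {} \<or> (l \<in> P \<and> K l \<subseteq> Q)"
  shows "(\<Sum>T\<in>Pow (N \<union> L). if P \<subseteq> T \<and> Q \<inter> T = {} \<and> (\<forall>l\<in>L. l \<in> T \<or> K l \<inter> T \<noteq> {})
            then (1/2::real) ^ card ((N \<union> L) - {l\<in>L. l \<in> T \<and> K l \<inter> T = {}}) else 0)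
         = (1/2) ^ card ((P \<union> Q) - {l\<in>L. l \<in> P \<and> K l \<subseteq> Q})"
proof -
  define a where "a x b = (if (b \<and> x\<in>Q) \<or> (\<not>b \<and> x\<in>P) then 0 else (1/2::real))" for x b
  define c where "c l A b = (if (b \<and> l\<in>Q) \<or> (\<not>b \<and> l\<in>P) then 0 else if K l \<inter> A \<noteq> {} then 1/2
      else (if b then 1 else (0::real)))" for l A b
  define F where "F = {l\<in>L. l \<in> P \<and> K l \<subseteq> Q}"
  define e where "e l = (if l \<in> (P \<union> Q) - F then 1/2 else (1::real))" for l
  define f where "f T = (if P \<subseteq> T \<and> Q \<inter> T = {} \<and> (\<forall>l\<in>L. l \<in> T \<or> K l \<inter> T \<noteq> {})
            then (1/2::real) ^ card ((N \<union> L) - {l\<in>L. l \<in> T \<and> K l \<inter> T = {}}) else 0)" for T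
  have step1: "f (A \<union> B) = (\<Prod>x\<in>N. a x (x\<in>A)) * (\<Prod>l\<in>L. c l A (l\<in>B))"
    if A: "A \<subseteq> N" and B: "B \<subseteq> L" for A B
  proof -
    have KA: "K l \<inter> (A \<union> B) = K l \<inter> A" if "l \<in> L" for l using KN[OF that] B NL by blast
    show ?thesis
    proof (cases "P \<subseteq> A \<union> B \<and> Q \<inter> (A \<union> B) = {} \<and> (\<forall>l\<in>L. l \<in> A \<union> B \<or> K l \<inter> (A \<union> B) \<noteq> {})")
      case True
      define Fl where "Fl = {l\<in>L. K l \<inter> A = {}}"
      have Fl: "{l\<in>L. l \<in> A \<union> B \<and> K l \<inter> (A \<union> B) = {}} = Fl"
        using True KA KN A B NL unfolding Fl_def by blast
      have "(\<Prod>x\<in>N. a x (x\<in>A)) = (\<Prod>x\<in>N. 1/2)"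
        using True A B NL by (intro prod.cong) (auto simp: a_def)
      also have "\<dots> = (1/2) ^ card N" by simp
      finally have pa: "(\<Prod>x\<in>N. a x (x\<in>A)) = (1/2) ^ card N" .
      have "(\<Prod>l\<in>L. c l A (l\<in>B)) = (\<Prod>l\<in>L. if l \<in> L - Fl then 1/2 else 1)"
        using True A B NL KA unfolding Fl_def by (intro prod.cong) (auto simp: c_def)
      also have "\<dots> = (1/2) ^ card (L - Fl)" using fL prod_if_half[of L "L - Fl" "1/2::real"]
        by (simp add: Int_absorb1)
      finally have pc: "(\<Prod>l\<in>L. c l A (l\<in>B)) = (1/2) ^ card (L - Fl)" .
      have "card ((N \<union> L) - Fl) = card N + card (L - Fl)"
      proof -
        have "(N \<union> L) - Fl = N \<union> (L - Fl)" using NL unfolding Fl_def by auto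
        moreover have "N \<inter> (L - Fl) = {}" using NL by blast
        ultimately show ?thesis using fN fL by (simp add: card_Un_disjoint)
      qed
      then show ?thesis unfolding f_def using True Fl pa pc by (simp add: power_add)
    next
      case False
      have "(\<exists>x\<in>N. a x (x\<in>A) = 0) \<or> (\<exists>l\<in>L. c l A (l\<in>B) = 0)"
      proof (cases "P \<subseteq> A \<union> B")
        case False
        then obtain x where x: "x \<in> P" "x \<notin> A" "x \<notin> B" by blast
        then have "x \<in> N \<or> x \<in> L" using PQs by blast
        then show ?thesis
        proof
          assume "x \<in> N" then show ?thesis using x by (intro disjI1 bexI[of _ x]) (simp_all add: a_def)
        next
          assume "x \<in> L" then show ?thesis using x by (intro disjI2 bexI[of _ x]) (simp_all add: c_def)
        qed
      next
        case PT: True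
        show ?thesis
        proof (cases "Q \<inter> (A \<union> B) = {}")
          case False
          then obtain x where x: "x \<in> Q" "x \<in> A \<or> x \<in> B" by blast
          then show ?thesis
          proof (cases "x \<in> A")
            case True
            then have "x \<in> N" using A by blast
            then show ?thesis using x True by (intro disjI1 bexI[of _ x]) (simp_all add: a_def)
          next
            case False
            then have "x \<in> B" using x by simp
            then have "x \<in> L" using B by blast
            then show ?thesis using x \<open>x \<in> B\<close> by (intro disjI2 bexI[of _ x]) (simp_all add: c_def)
          qed
        next
          case True
          with PT \<open>\<not> _\<close> obtain l where l: "l \<in> L" "l \<notin> A \<union> B" "K l \<inter> (A \<union> B) = {}" by blast
          then have "K l \<inter> A = {}" using KA by simp
          then show ?thesis using l by (intro disjI2 bexI[of _ l]) (simp_all add: c_def)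
        qed
      qed
      then have "(\<Prod>x\<in>N. a x (x\<in>A)) * (\<Prod>l\<in>L. c l A (l\<in>B)) = 0" using fN fL by auto
      moreover have "f (A \<union> B) = 0" unfolding f_def by (simp only: False if_False)
      ultimately show ?thesis by simp
    qed
  qed
  have cover: "Pow (N \<union> L) = (\<lambda>(A,B). A \<union> B) ` (Pow N \<times> Pow L)"
  proof
    show "Pow (N \<union> L) \<subseteq> (\<lambda>(A,B). A \<union> B) ` (Pow N \<times> Pow L)"
    proof
      fix T assume "T \<in> Pow (N \<union> L)"
      show "T \<in> (\<lambda>(A,B). A \<union> B) ` (Pow N \<times> Pow L)"
      proof (rule image_eqI[where x="(T \<inter> N, T \<inter> L)"])
        show "T = (\<lambda>(A,B). A \<union> B) (T \<inter> N, T \<inter> L)" using \<open>T \<in> Pow (N \<union> L)\<close> by auto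
      qed simp
    qed
  next
    show "(\<lambda>(A,B). A \<union> B) ` (Pow N \<times> Pow L) \<subseteq> Pow (N \<union> L)" by blast
  qed
  have inj: "inj_on (\<lambda>(A,B). A \<union> B) (Pow N \<times> Pow L)"
  proof (rule inj_onI)
    fix x y assume x: "x \<in> Pow N \<times> Pow L" and y: "y \<in> Pow N \<times> Pow L"
      and e: "(\<lambda>(A,B). A \<union> B) x = (\<lambda>(A,B). A \<union> B) y"
    obtain A B where xAB: "x = (A,B)" by (cases x)
    obtain A' B' where yAB: "y = (A',B')" by (cases y)
    have s: "A \<subseteq> N" "B \<subseteq> L" "A' \<subseteq> N" "B' \<subseteq> L" using x y xAB yAB by auto
    have e2: "A \<union> B = A' \<union> B'" using e xAB yAB by simp
    have "A = (A \<union> B) \<inter> N" "A' = (A' \<union> B') \<inter> N" "B = (A \<union> B) \<inter> L" "B' = (A' \<union> B') \<inter> L"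
      using s NL by blast+
    then show "x = y" using xAB yAB e2 by metis
  qed
  have "(\<Sum>T\<in>Pow (N \<union> L). f T) = (\<Sum>(A,B)\<in>Pow N \<times> Pow L. f (A \<union> B))"
    unfolding cover by (subst sum.reindex[OF inj]) (simp add: case_prod_unfold)
  also have "\<dots> = (\<Sum>A\<in>Pow N. \<Sum>B\<in>Pow L. f (A \<union> B))"
    by (simp add: sum.cartesian_product)
  also have "\<dots> = (\<Sum>A\<in>Pow N. (\<Prod>x\<in>N. a x (x\<in>A)) * (\<Sum>B\<in>Pow L. \<Prod>l\<in>L. c l A (l\<in>B)))"
    by (intro sum.cong refl) (simp add: step1 sum_distrib_left)
  also have "\<dots> = (\<Sum>A\<in>Pow N. (\<Prod>x\<in>N. a x (x\<in>A)) * (\<Prod>l\<in>L. c l A True + c l A False))"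
  proof (intro sum.cong refl)
    fix A show "(\<Prod>x\<in>N. a x (x\<in>A)) * (\<Sum>B\<in>Pow L. \<Prod>l\<in>L. c l A (l\<in>B)) = (\<Prod>x\<in>N. a x (x\<in>A)) * (\<Prod>l\<in>L. c l A True + c l A False)"
      using sum_Pow_prod[OF fL, of "\<lambda>l b. c l A b"] by simp
  qed
  also have "\<dots> = (\<Sum>A\<in>Pow N. (\<Prod>x\<in>N. a x (x\<in>A)) * (\<Prod>l\<in>L. e l))"
  proof (intro sum.cong refl)
    fix A assume A: "A \<in> Pow N"
    show "(\<Prod>x\<in>N. a x (x\<in>A)) * (\<Prod>l\<in>L. c l A True + c l A False) = (\<Prod>x\<in>N. a x (x\<in>A)) * (\<Prod>l\<in>L. e l)"
    proof (cases "(\<Prod>x\<in>N. a x (x\<in>A)) = 0")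
      case False
      then have nz: "\<forall>x\<in>N. a x (x\<in>A) \<noteq> 0" using fN by auto
      have PA: "P \<inter> N \<subseteq> A"
      proof
        fix x assume "x \<in> P \<inter> N"
        then show "x \<in> A" using nz[rule_format, of x] unfolding a_def by (cases "x \<in> A") auto
      qed
      have QA: "Q \<inter> A = {}"
      proof (rule ccontr)
        assume "Q \<inter> A \<noteq> {}"
        then obtain x where "x \<in> Q" "x \<in> A" by blast
        moreover then have "x \<in> N" using A by blast
        ultimately show False using nz[rule_format, of x] unfolding a_def by simp
      qed
      have "(\<Prod>l\<in>L. c l A True + c l A False) = (\<Prod>l\<in>L. e l)"
      proof (intro prod.cong refl)
        fix l assume l: "l \<in> L"
        have lN: "l \<notin> N" using l NL by auto
        have KlN: "K l \<subseteq> N" using KN[OF l] .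
        show "c l A True + c l A False = e l"
          using G[OF l] PA QA PQ KlN lN l unfolding c_def e_def F_def by auto
      qed
      then show ?thesis by simp
    qed simp
  qed
  also have "\<dots> = (\<Sum>A\<in>Pow N. \<Prod>x\<in>N. a x (x\<in>A)) * (\<Prod>l\<in>L. e l)"
    by (simp add: sum_distrib_right)
  also have "\<dots> = (\<Prod>x\<in>N. a x True + a x False) * (\<Prod>l\<in>L. e l)"
    using sum_Pow_prod[OF fN, of a] by simp
  also have "\<dots> = (\<Prod>x\<in>N. e x) * (\<Prod>l\<in>L. e l)"
  proof -
    have "(\<Prod>x\<in>N. a x True + a x False) = (\<Prod>x\<in>N. e x)"
    proof (intro prod.cong refl)
      fix x assume "x \<in> N"
      then have "x \<notin> F" using NL unfolding F_def by auto
      then show "a x True + a x False = e x" using PQ unfolding a_def e_def by auto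
    qed
    then show ?thesis by simp
  qed
  also have "\<dots> = (\<Prod>x\<in>N \<union> L. e x)" using fN fL NL by (simp add: prod.union_disjoint)
  also have "\<dots> = (1/2) ^ card ((N \<union> L) \<inter> ((P \<union> Q) - F))"
    unfolding e_def using fN fL prod_if_half[of "N \<union> L" "(P \<union> Q) - F" "1/2::real"] by simp
  also have "(N \<union> L) \<inter> ((P \<union> Q) - F) = (P \<union> Q) - F" using PQs by auto
  finally show ?thesis unfolding f_def F_def .
qed


theorem lemma14:
  fixes m :: nat and V :: "nat \<Rightarrow> 'v set" and r :: "nat \<Rightarrow> 'v" and p :: "nat \<Rightarrow> 'v \<Rightarrow> 'v"
    and S :: "'v lit set"
  assumes "btbg m V r p"
    and "consistent S" and "fst ` S \<subseteq> VH m V"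
    and "guarded m V r p S"
  shows "Pr m V r p (EC m V r p S) = (1/2) ^ card (S - Fix m V r p S)"
proof -
  note B = assms(1) and cons = assms(2) and fS = assms(3) and gS = assms(4)
  define Lv where "Lv = (\<Union>k<m. tree_leaves (V k) (r k) (p k))"
  define Nv where "Nv = VH m V - Lv"
  define K where "K l = (\<Union>{clause_vars V p i j | i j. adjacent m V r p i j \<and> common_leaf V i j = l}) - {l}" for l
  have "\<forall>i<m. finite (V i)" using btbg_tree[OF B] unfolding rooted_tree_def by blast
  then have fVH: "finite (VH m V)" unfolding VH_def by simp
  have LvVH: "Lv \<subseteq> VH m V"
  proof
    fix x assume "x \<in> Lv"
    then obtain k where "k < m" "x \<in> tree_leaves (V k) (r k) (p k)" unfolding Lv_def by blast
    then show "x \<in> VH m V" using leaves_sub[of "V k" "r k" "p k"] unfolding VH_def by blast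
  qed
  have VHeq: "VH m V = Nv \<union> Lv" using LvVH unfolding Nv_def by blast
  have NL: "Nv \<inter> Lv = {}" unfolding Nv_def by blast
  have fN: "finite Nv" and fL: "finite Lv" using fVH VHeq by (metis finite_Un)+
  have clLv: "common_leaf V i j \<in> Lv" if a: "adjacent m V r p i j" for i j
  proof -
    have "i < m" using a unfolding adjacent_def by auto
    then show ?thesis using common_leaf_prop(1)[OF B a] unfolding Lv_def by blast
  qed
  have clin: "common_leaf V i j \<in> clause_vars V p i j" for i j
    unfolding clause_vars_def using to_root_self by fast
  have Kadj: "clause_vars V p i j = insert (common_leaf V i j) (K (common_leaf V i j))"
    if a: "adjacent m V r p i j" for i j
  proof -
    have "\<Union>{clause_vars V p i' j' | i' j'. adjacent m V r p i' j' \<and> common_leaf V i' j' = common_leaf V i j}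
        = clause_vars V p i j"
    proof
      show "\<Union>{clause_vars V p i' j' | i' j'. adjacent m V r p i' j' \<and> common_leaf V i' j' = common_leaf V i j}
        \<subseteq> clause_vars V p i j"
      proof
        fix x assume "x \<in> \<Union>{clause_vars V p i' j' | i' j'. adjacent m V r p i' j' \<and> common_leaf V i' j' = common_leaf V i j}"
        then obtain i' j' where "adjacent m V r p i' j'" "common_leaf V i' j' = common_leaf V i j"
          "x \<in> clause_vars V p i' j'" by blast
        then show "x \<in> clause_vars V p i j" using clause_unique[OF B a] by metis
      qed
    next
      show "clause_vars V p i j \<subseteq> \<Union>{clause_vars V p i' j' | i' j'. adjacent m V r p i' j' \<and> common_leaf V i' j' = common_leaf V i j}"
        using a by blast
    qed
    then have "K (common_leaf V i j) = clause_vars V p i j - {common_leaf V i j}" unfolding K_def by simp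
    then show ?thesis using clin[of i j] by blast
  qed
  have exadj: "\<exists>i j. adjacent m V r p i j \<and> common_leaf V i j = l" if lL: "l \<in> Lv" for l
  proof -
    obtain k where "k < m" "l \<in> tree_leaves (V k) (r k) (p k)" using lL unfolding Lv_def by blast
    then show ?thesis using leaf_adj[OF B] by blast
  qed
  have lK: "l \<notin> K l" for l unfolding K_def by blast
  have KN: "K l \<subseteq> Nv" if l: "l \<in> Lv" for l
  proof
    fix v assume v: "v \<in> K l"
    obtain i j where a: "adjacent m V r p i j" and e: "common_leaf V i j = l" using exadj[OF l] by blast
    have "v \<in> clause_vars V p i j" "v \<noteq> common_leaf V i j" using Kadj[OF a] v lK e by auto
    then have "v \<in> VH m V \<and> v \<notin> Lv" using clause_nonleaf[OF B a] unfolding Lv_def by blast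
    then show "v \<in> Nv" unfolding Nv_def by blast
  qed
  have FixEq: "Fix m V r p S0 = (\<lambda>l. (l, True)) ` {l\<in>Lv. (l, True) \<in> S0 \<and> (\<forall>v\<in>K l. (v, False) \<in> S0)}" for S0
  proof
    show "Fix m V r p S0 \<subseteq> (\<lambda>l. (l, True)) ` {l\<in>Lv. (l, True) \<in> S0 \<and> (\<forall>v\<in>K l. (v, False) \<in> S0)}"
    proof
      fix x assume "x \<in> Fix m V r p S0"
      then obtain i j where x: "x = (common_leaf V i j, True)" and a: "adjacent m V r p i j"
        and t: "(common_leaf V i j, True) \<in> S0"
        and f: "\<forall>v \<in> clause_vars V p i j - {common_leaf V i j}. (v, False) \<in> S0"
        unfolding Fix_def by blast
      have "\<forall>v\<in>K (common_leaf V i j). (v, False) \<in> S0" using f Kadj[OF a] lK by auto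
      then show "x \<in> (\<lambda>l. (l, True)) ` {l\<in>Lv. (l, True) \<in> S0 \<and> (\<forall>v\<in>K l. (v, False) \<in> S0)}"
        using x t clLv[OF a] by blast
    qed
  next
    show "(\<lambda>l. (l, True)) ` {l\<in>Lv. (l, True) \<in> S0 \<and> (\<forall>v\<in>K l. (v, False) \<in> S0)} \<subseteq> Fix m V r p S0"
    proof
      fix x assume "x \<in> (\<lambda>l. (l, True)) ` {l\<in>Lv. (l, True) \<in> S0 \<and> (\<forall>v\<in>K l. (v, False) \<in> S0)}"
      then obtain l where x: "x = (l, True)" and l: "l \<in> Lv" and t: "(l, True) \<in> S0"
        and f: "\<forall>v\<in>K l. (v, False) \<in> S0" by blast
      obtain i j where a: "adjacent m V r p i j" and e: "common_leaf V i j = l" using exadj[OF l] by blast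
      have f2: "\<forall>v \<in> clause_vars V p i j - {common_leaf V i j}. (v, False) \<in> S0"
        using f Kadj[OF a] e by auto
      show "x \<in> Fix m V r p S0" unfolding Fix_def using x a t e f2 by blast
    qed
  qed
  define P where "P = {x. (x, True) \<in> S}"
  define Q where "Q = {x. (x, False) \<in> S}"
  have PQ: "P \<inter> Q = {}" using cons unfolding consistent_def P_def Q_def by blast
  have PQs: "P \<union> Q \<subseteq> Nv \<union> Lv" using fS VHeq unfolding P_def Q_def by force
  have G: "(l \<notin> P \<and> l \<notin> Q) \<or> K l \<inter> P \<noteq> {} \<or> (l \<in> P \<and> K l \<subseteq> Q)" if l: "l \<in> Lv" for l
  proof -
    obtain i j where a: "adjacent m V r p i j" and e: "common_leaf V i j = l" using exadj[OF l] by blast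
    have "\<not> occurs l S \<or> (\<exists>v \<in> clause_vars V p i j - {l}. (v, True) \<in> S)
      \<or> ((l, True) \<in> S \<and> (\<forall>v \<in> clause_vars V p i j - {l}. (v, False) \<in> S))"
      using gS a e unfolding guarded_def Let_def by blast
    moreover have "clause_vars V p i j - {l} = K l" using Kadj[OF a] e lK by auto
    ultimately show ?thesis unfolding occurs_def P_def Q_def by blast
  qed
  define lits where "lits T = (\<lambda>x. (x, x \<in> T)) ` VH m V" for T
  define C where "C T \<longleftrightarrow> P \<subseteq> T \<and> Q \<inter> T = {} \<and> (\<forall>l\<in>Lv. l \<in> T \<or> K l \<inter> T \<noteq> {})" for T
  have inj: "inj_on lits (Pow (VH m V))"
  proof (rule inj_onI)
    fix T1 T2 assume T1: "T1 \<in> Pow (VH m V)" and T2: "T2 \<in> Pow (VH m V)" and e: "lits T1 = lits T2"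
    show "T1 = T2"
    proof
      show "T1 \<subseteq> T2"
      proof
        fix x assume "x \<in> T1"
        then have "(x, True) \<in> lits T1" using T1 unfolding lits_def by force
        then have "(x, True) \<in> lits T2" using e by simp
        then show "x \<in> T2" unfolding lits_def by auto
      qed
    next
      show "T2 \<subseteq> T1"
      proof
        fix x assume "x \<in> T2"
        then have "(x, True) \<in> lits T2" using T2 unfolding lits_def by force
        then have "(x, True) \<in> lits T1" using e by simp
        then show "x \<in> T1" unfolding lits_def by auto
      qed
    qed
  qed
  have ECeq: "EC m V r p S = lits ` {T \<in> Pow (VH m V). C T}"
  proof
    show "EC m V r p S \<subseteq> lits ` {T \<in> Pow (VH m V). C T}"
    proof
      fix S' assume "S' \<in> EC m V r p S"
      then have cs: "consistent S'" and fs: "fst ` S' = VH m V"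
        and sat: "\<forall>i j. adjacent m V r p i j \<longrightarrow> (\<exists>v \<in> clause_vars V p i j. (v, True) \<in> S')"
        and sub: "S \<subseteq> S'" unfolding EC_def SAT_def by auto
      define T where "T = {x. (x, True) \<in> S'}"
      have bT: "b = (x \<in> T)" if "(x, b) \<in> S'" for x b
        using that cs unfolding consistent_def T_def by (cases b) auto
      have "S' = lits T"
      proof
        show "S' \<subseteq> lits T"
        proof
          fix y assume y: "y \<in> S'"
          obtain x b where xb: "y = (x, b)" by (cases y)
          have "x \<in> VH m V" using fs y xb by force
          then show "y \<in> lits T" using bT y xb unfolding lits_def by auto
        qed
      next
        show "lits T \<subseteq> S'"
        proof
          fix y assume "y \<in> lits T"
          then obtain x where x: "x \<in> VH m V" and y: "y = (x, x \<in> T)" unfolding lits_def by auto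
          obtain b where "(x, b) \<in> S'" using x fs by force
          then show "y \<in> S'" using bT y by auto
        qed
      qed
      moreover have "T \<subseteq> VH m V" using fs unfolding T_def by force
      moreover have "C T"
      proof -
        have "P \<subseteq> T" using sub unfolding P_def T_def by auto
        moreover have "Q \<inter> T = {}" using sub cs unfolding Q_def T_def consistent_def by auto
        moreover have "\<forall>l\<in>Lv. l \<in> T \<or> K l \<inter> T \<noteq> {}"
        proof
          fix l assume l: "l \<in> Lv"
          obtain i j where a: "adjacent m V r p i j" and e: "common_leaf V i j = l" using exadj[OF l] by blast
          obtain v where "v \<in> clause_vars V p i j" "(v, True) \<in> S'" using sat a by blast
          then show "l \<in> T \<or> K l \<inter> T \<noteq> {}" using Kadj[OF a] e unfolding T_def by auto
        qed
        ultimately show ?thesis unfolding C_def by blast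
      qed
      ultimately show "S' \<in> lits ` {T \<in> Pow (VH m V). C T}" by blast
    qed
  next
    show "lits ` {T \<in> Pow (VH m V). C T} \<subseteq> EC m V r p S"
    proof
      fix S' assume "S' \<in> lits ` {T \<in> Pow (VH m V). C T}"
      then obtain T where S': "S' = lits T" and T: "T \<subseteq> VH m V" and CT: "C T" by blast
      have "consistent S'" unfolding S' lits_def consistent_def by auto
      moreover have "fst ` S' = VH m V" unfolding S' lits_def by (simp add: image_image)
      moreover have "\<forall>i j. adjacent m V r p i j \<longrightarrow> (\<exists>v \<in> clause_vars V p i j. (v, True) \<in> S')"
      proof (intro allI impI)
        fix i j assume a: "adjacent m V r p i j"
        define l where "l = common_leaf V i j"
        have l: "l \<in> Lv" using clLv[OF a] unfolding l_def .
        have cv: "clause_vars V p i j = insert l (K l)" using Kadj[OF a] unfolding l_def .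
        have "l \<in> T \<or> K l \<inter> T \<noteq> {}" using CT l unfolding C_def by blast
        then obtain v where "v \<in> insert l (K l)" "v \<in> T" by blast
        moreover then have "v \<in> VH m V" using T by blast
        ultimately show "\<exists>v \<in> clause_vars V p i j. (v, True) \<in> S'" unfolding cv S' lits_def by force
      qed
      moreover have "S \<subseteq> S'"
      proof
        fix y assume y: "y \<in> S"
        obtain x b where xb: "y = (x, b)" by (cases y)
        have xV: "x \<in> VH m V" using fS y xb by force
        have "b = (x \<in> T)"
        proof (cases b)
          case True then have "x \<in> P" using y xb unfolding P_def by simp
          then show ?thesis using CT True unfolding C_def by blast
        next
          case False then have "x \<in> Q" using y xb unfolding Q_def by simp
          then show ?thesis using CT False unfolding C_def by blast
        qed
        then show "y \<in> S'" unfolding S' lits_def using xV xb by auto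
      qed
      ultimately show "S' \<in> EC m V r p S" unfolding EC_def SAT_def by blast
    qed
  qed
  have fixT: "{x. (x, True) \<in> Fix m V r p (lits T)} = {l\<in>Lv. l \<in> T \<and> K l \<inter> T = {}}"
    if T: "T \<subseteq> VH m V" for T
  proof -
    have "{x. (x, True) \<in> Fix m V r p (lits T)} = {l\<in>Lv. (l, True) \<in> lits T \<and> (\<forall>v\<in>K l. (v, False) \<in> lits T)}"
      unfolding FixEq by auto
    also have "\<dots> = {l\<in>Lv. l \<in> T \<and> K l \<inter> T = {}}"
    proof (intro Collect_cong conj_cong refl)
      fix l assume l: "l \<in> Lv"
      show "((l, True) \<in> lits T) = (l \<in> T)" using T LvVH l unfolding lits_def by auto
      have "K l \<subseteq> VH m V" using KN[OF l] unfolding Nv_def by blast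
      then show "(\<forall>v\<in>K l. (v, False) \<in> lits T) = (K l \<inter> T = {})" unfolding lits_def by auto
    qed
    finally show ?thesis .
  qed
  have "Pr m V r p (EC m V r p S) = (\<Sum>T\<in>{T \<in> Pow (VH m V). C T}. prob m V r p (lits T))"
    unfolding Pr_def ECeq by (rule sum.reindex_cong[OF inj_on_subset[OF inj]]) auto
  also have "\<dots> = (\<Sum>T\<in>{T \<in> Pow (VH m V). C T}. (1/2) ^ card (VH m V - {l\<in>Lv. l \<in> T \<and> K l \<inter> T = {}}))"
    unfolding prob_def by (intro sum.cong refl) (simp add: fixT)
  also have "\<dots> = (\<Sum>T\<in>Pow (VH m V). if C T then (1/2) ^ card (VH m V - {l\<in>Lv. l \<in> T \<and> K l \<inter> T = {}}) else 0)"
    using fVH by (intro sum.inter_filter) simp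
  also have "\<dots> = (1/2) ^ card ((P \<union> Q) - {l\<in>Lv. l \<in> P \<and> K l \<subseteq> Q})"
    unfolding VHeq C_def using abstract_count[OF fN fL NL KN PQ PQs G] by simp
  also have "card ((P \<union> Q) - {l\<in>Lv. l \<in> P \<and> K l \<subseteq> Q}) = card (S - Fix m V r p S)"
  proof -
    have FS: "Fix m V r p S = (\<lambda>l. (l, True)) ` {l\<in>Lv. l \<in> P \<and> K l \<subseteq> Q}"
      unfolding FixEq P_def Q_def by auto
    have injf: "inj_on fst (S - Fix m V r p S)"
    proof (rule inj_onI)
      fix y z assume "y \<in> S - Fix m V r p S" "z \<in> S - Fix m V r p S" "fst y = fst z"
      then show "y = z" using cons unfolding consistent_def by (cases y, cases z) (metis (full_types) DiffD1 fst_conv)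
    qed
    have "fst ` (S - Fix m V r p S) = (P \<union> Q) - {l\<in>Lv. l \<in> P \<and> K l \<subseteq> Q}"
    proof
      show "fst ` (S - Fix m V r p S) \<subseteq> (P \<union> Q) - {l\<in>Lv. l \<in> P \<and> K l \<subseteq> Q}"
      proof
        fix x assume "x \<in> fst ` (S - Fix m V r p S)"
        then obtain b where xb: "(x, b) \<in> S" "(x, b) \<notin> Fix m V r p S" by force
        have "x \<in> P \<union> Q" using xb(1) unfolding P_def Q_def by (cases b) auto
        moreover have "x \<notin> {l\<in>Lv. l \<in> P \<and> K l \<subseteq> Q}"
        proof
          assume xF: "x \<in> {l\<in>Lv. l \<in> P \<and> K l \<subseteq> Q}"
          then have "(x, True) \<in> S" unfolding P_def by simp
          then have "b = True" using xb(1) cons unfolding consistent_def by (cases b) auto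
          then show False using xb(2) xF FS by blast
        qed
        ultimately show "x \<in> (P \<union> Q) - {l\<in>Lv. l \<in> P \<and> K l \<subseteq> Q}" by blast
      qed
    next
      show "(P \<union> Q) - {l\<in>Lv. l \<in> P \<and> K l \<subseteq> Q} \<subseteq> fst ` (S - Fix m V r p S)"
      proof
        fix x assume x: "x \<in> (P \<union> Q) - {l\<in>Lv. l \<in> P \<and> K l \<subseteq> Q}"
        then obtain b where xb: "(x, b) \<in> S" unfolding P_def Q_def by blast
        have "(x, b) \<notin> Fix m V r p S" using x FS by blast
        then show "x \<in> fst ` (S - Fix m V r p S)" using xb by force
      qed
    qed
    then show ?thesis using card_image[OF injf] by simp
  qed
  finally show ?thesis .
qed

end
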